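(* Let $h$ be an isometry of the $E_8$ lattice of order $5$ which does not have $1$ as an eigenvalue. Then the lattice $(h-1)E_8$ is rootless.
   Context: $E_8$ is the $E_8$ root lattice; rootless means containing no vectors of norm $2$. *)

theory Defs
  imports "HOL-Analysis.Analysis"
begin

definition E8 :: "(real^8) set" where
  "E8 = {x. ((\<forall>i. x $ i \<in> \<int>) \<or> (\<forall>i. x $ i - 1/2 \<in> \<int>))
            \<and> (\<exists>k::int. (\<Sum>i\<in>UNIV. x $ i) = 2 * of_int k)}"

definition lattice_isometry :: "(real^8) set \<Rightarrow> real^8^8 \<Rightarrow> bool" where
  "lattice_isometry L h \<longleftrightarrow> orthogonal_matrix h \<and> (\<lambda>x. h *v x) ` L = L"

definition has_order :: "real^8^8 \<Rightarrow> nat \<Rightarrow> bool" where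
  "has_order h n \<longleftrightarrow> 0 < n \<and> ((\<lambda>x. h *v x) ^^ n) = id
      \<and> (\<forall>k. 0 < k \<and> k < n \<longrightarrow> ((\<lambda>x. h *v x) ^^ k) \<noteq> id)"

definition has_eigenvalue :: "real^8^8 \<Rightarrow> real \<Rightarrow> bool" where
  "has_eigenvalue h c \<longleftrightarrow> (\<exists>v. v \<noteq> 0 \<and> h *v v = c *\<^sub>R v)"

definition rootless :: "(real^8) set \<Rightarrow> bool" where
  "rootless L \<longleftrightarrow> (\<forall>x\<in>L. x \<bullet> x \<noteq> 2)"

end

theory Submission
  imports Defs
begin

lemma E8_norm_even:
  assumes "x \<in> E8"
  shows "\<exists>m::int. x \<bullet> x = 2 * of_int m"
proof -
  from assms obtain K :: int where K: "(\<Sum>i\<in>UNIV. x $ i) = 2 * of_int K"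
    and C: "(\<forall>i. x $ i \<in> \<int>) \<or> (\<forall>i. x $ i - 1/2 \<in> \<int>)"
    unfolding E8_def by blast
  have ip: "x \<bullet> x = (\<Sum>i\<in>UNIV. x $ i * x $ i)"
    by (simp add: inner_vec_def)
  from C show ?thesis
  proof
    assume A: "\<forall>i. x $ i \<in> \<int>"
    define k where "k i = \<lfloor>x $ i\<rfloor>" for i
    have xk: "x $ i = of_int (k i)" for i
      using A unfolding k_def by (metis Ints_cases floor_of_int)
    have "of_int (\<Sum>i\<in>UNIV. k i) = (2 * of_int K :: real)"
      using K by (simp add: xk)
    hence sk: "(\<Sum>i\<in>UNIV. k i) = 2 * K" by linarith
    have ev: "even (k i * k i - k i)" for i
    proof -
      have "k i * k i - k i = k i * (k i - 1)" by (simp add: algebra_simps)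
      thus ?thesis by simp
    qed
    have "even (\<Sum>i\<in>UNIV. k i * k i - k i)" by (rule dvd_sum) (use ev in auto)
    moreover have "(\<Sum>i\<in>UNIV. k i * k i) = (\<Sum>i\<in>UNIV. k i * k i - k i) + (\<Sum>i\<in>UNIV. k i)"
      by (simp add: sum_subtractf)
    ultimately have "even (\<Sum>i\<in>UNIV. k i * k i)" using sk by simp
    then obtain m where m: "(\<Sum>i\<in>UNIV. k i * k i) = 2 * m" by blast
    have "x \<bullet> x = of_int (\<Sum>i\<in>UNIV. k i * k i)" using ip by (simp add: xk)
    thus ?thesis using m by auto
  next
    assume A: "\<forall>i. x $ i - 1/2 \<in> \<int>"
    define k where "k i = \<lfloor>x $ i - 1/2\<rfloor>" for i
    have xk: "x $ i = of_int (k i) + 1/2" for i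
    proof -
      have "x $ i - 1/2 = of_int (k i)"
        using A unfolding k_def by (metis Ints_cases floor_of_int)
      thus ?thesis by simp
    qed
    have ev: "even (k i * k i + k i)" for i
    proof -
      have "k i * k i + k i = k i * (k i + 1)" by (simp add: algebra_simps)
      thus ?thesis by simp
    qed
    have "even (\<Sum>i\<in>UNIV. k i * k i + k i)" by (rule dvd_sum) (use ev in auto)
    then obtain m where m: "(\<Sum>i\<in>UNIV. k i * k i + k i) = 2 * m" by blast
    have "x \<bullet> x = (\<Sum>i\<in>UNIV. of_int (k i * k i + k i) + 1/4)"
      unfolding ip xk by (rule sum.cong) (auto simp: algebra_simps)
    also have "\<dots> = of_int (\<Sum>i\<in>UNIV. k i * k i + k i) + 2"
      by (simp add: sum.distrib)
    finally have "x \<bullet> x = 2 * of_int (m + 1)" using m by simp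
    thus ?thesis by blast
  qed
qed

theorem lemmaC2:
  fixes h :: "real^8^8"
  assumes "lattice_isometry E8 h"
    and "has_order h 5"
    and "\<not> has_eigenvalue h 1"
  shows "rootless ((\<lambda>x. h *v x - x) ` E8)"
proof -
  define H where "H = (\<lambda>x::real^8. h *v x)"
  have orth: "orthogonal_matrix h" using assms(1) unfolding lattice_isometry_def by blast
  have ot: "orthogonal_transformation H"
    unfolding H_def orthogonal_transformation_matrix
    using orth by (simp add: matrix_vector_mul_linear matrix_of_matrix_vector_mul)
  have inn: "H u \<bullet> H v = u \<bullet> v" for u v
    using ot unfolding orthogonal_transformation_def by blast
  have lin: "linear H" using ot unfolding orthogonal_transformation_def by blast
  have add: "H (u + v) = H u + H v" for u v using lin by (simp add: linear_add)
  have neg: "H (- u) = - H u" for u using lin by (simp add: linear_neg)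
  have H5: "H (H (H (H (H u)))) = u" for u
  proof -
    have "(H ^^ 5) = id" using assms(2) unfolding has_order_def H_def by blast
    hence "(H ^^ 5) u = u" by simp
    thus ?thesis by (simp add: eval_nat_numeral)
  qed
  have noeig: "H v = v \<Longrightarrow> v = 0" for v
    using assms(3) unfolding has_eigenvalue_def H_def by auto
  show ?thesis unfolding rootless_def
  proof
    fix r assume "r \<in> (\<lambda>x. h *v x - x) ` E8"
    then obtain x where xE: "x \<in> E8" and r: "r = H x - x" unfolding H_def by blast
    show "r \<bullet> r \<noteq> 2"
    proof
      assume rr: "r \<bullet> r = 2"
      define n where "n = x \<bullet> x"
      define c1 where "c1 = x \<bullet> H x"
      define c2 where "c2 = x \<bullet> H (H x)"
      define s where "s = x + H x + H (H x) + H (H (H x)) + H (H (H (H x)))"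
      have "H s = s" unfolding s_def by (simp add: add H5 algebra_simps)
      hence s0: "s = 0" by (rule noeig)
      have c4: "x \<bullet> H (H (H (H x))) = c1"
      proof -
        have "x \<bullet> H (H (H (H x))) = H x \<bullet> H (H (H (H (H x))))" by (simp add: inn)
        thus ?thesis by (simp add: H5 c1_def inner_commute)
      qed
      have c3: "x \<bullet> H (H (H x)) = c2"
      proof -
        have "x \<bullet> H (H (H x)) = H (H x) \<bullet> H (H (H (H (H x))))" by (simp add: inn)
        thus ?thesis by (simp add: H5 c2_def inner_commute)
      qed
      have "0 = x \<bullet> s" using s0 by simp
      also have "\<dots> = n + 2 * c1 + 2 * c2"
        unfolding s_def n_def by (simp add: inner_add_right c3 c4 c1_def c2_def)
      finally have sum0: "n + 2 * c1 + 2 * c2 = 0" by simp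
      have "r \<bullet> r = H x \<bullet> H x - 2 * c1 + n"
        unfolding r n_def c1_def by (simp add: inner_diff_left inner_diff_right inner_commute)
      hence e1: "2 * n - 2 * c1 = 2" using rr by (simp add: inn n_def)
      have nn: "(x + H (H x)) \<bullet> (x + H (H x)) = 2 * n + 2 * c2"
        unfolding n_def c2_def by (simp add: inner_add_left inner_add_right inner_commute inn)
      have "(x + H (H x)) \<bullet> (x + H (H x)) \<ge> 0" by simp
      hence n2: "n \<le> 2" using nn sum0 e1 by linarith
      have n0: "n \<ge> 0" unfolding n_def by simp
      obtain m :: int where m: "n = 2 * of_int m" using E8_norm_even[OF xE] n_def by blast
      have "m = 0 \<or> m = 1" using n2 n0 m by linarith
      thus False
      proof
        assume "m = 0"
        hence "x = 0" using m n_def by simp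
        hence "r = 0" using r lin by (simp add: linear_0)
        thus False using rr by simp
      next
        assume "m = 1"
        hence "(x + H (H x)) \<bullet> (x + H (H x)) = 0" using nn sum0 e1 m by linarith
        hence "H (H x) = - x" by (simp add: add_eq_0_iff)
        hence "H (H (H (H x))) = x" by (simp add: neg)
        hence "H x = x" using H5[of x] by simp
        hence "x = 0" by (rule noeig)
        hence "r = 0" using r lin by (simp add: linear_0)
        thus False using rr by simp
      qed
    qed
  qed
qed

end
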